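(* Let $(X,\Gamma)$ be a $(\mu,\nu)$-path system space. For every $\delta\ge0$, $\varepsilon\ge0$, $\theta\ge0$ there exists $L\ge0$ with the following property. Let $Y_0,A_1,Y_1,\dots,A_n,Y_n\subseteq X$ be non-empty subsets forming a $(\delta,\varepsilon,L)$-buffering sequence. Then for every $i\in\{1,\dots,n\}$, $d_{A_i}(Y_0,Y_i)>\theta$.
   Context: A path is a rectifiable continuous map $\alpha\colon[a,b]\to X$ parametrised by arc length; it is a $(\kappa,\lambda)$-quasi-geodesic if $d(\alpha(t),\alpha(t'))\le|t-t'|\le\kappa d(\alpha(t),\alpha(t'))+\lambda$. A $(\mu,\nu)$-path system space $(X,\Gamma)$ is a geodesic metric space $X$ with a collection $\Gamma$ of paths closed under subpaths, such that any two points are joined by an element of $\Gamma$ and every element is a $(\mu,\nu)$-quasi-geodesic. A map $\pi_A\colon X\to A$ onto a subset $A$ is $\delta$-constricting if (CS1) $d(x,\pi_A(x))\le\delta$ for $x\in A$, and (CS2) for all $x,y\in X$ and $\gamma\in\Gamma$ joining $x$ to $y$, if $d(\pi_A(x),\pi_A(y))>\delta$ then $\gamma$ meets $B_X(\pi_A(x),\delta)$ and $B_X(\pi_A(y),\delta)$. Notation: $d_A(x,y)=d(\pi_A(x),\pi_A(y))$, $\operatorname{diam}_A(Y)=\operatorname{diam}(\pi_A(Y))$, $d_A(Y,Z)=d(\pi_A(Y),\pi_A(Z))$ (infimum of distances). A sequence $Y_0,A_1,Y_1,\dots,A_n,Y_n$ of non-empty subsets is $(\delta,\varepsilon,L)$-buffering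 if for each $i\in\{1,\dots,n\}$ there is a $\delta$-constricting map $\pi_{A_i}\colon X\to A_i$ such that: (BS1) if $i\ne n$, $\max\{\operatorname{diam}_{A_i}(A_{i+1}),\operatorname{diam}_{A_{i+1}}(A_i)\}\le\varepsilon$; (BS2) $\max\{\operatorname{diam}_{A_i}(Y_{i-1}),\operatorname{diam}_{A_i}(Y_i)\}\le\varepsilon$; (BS3) $\max\{d(A_i,Y_{i-1}),d(A_i,Y_i)\}\le\varepsilon$; (BS4) $d_{A_i}(Y_{i-1},Y_i)\ge L$. *)

theory Defs
  imports "HOL-Analysis.Analysis"
begin

text \<open>A path is represented as a triple (a, b, alpha): the map alpha restricted to the
interval [a, b].  Only the values of alpha on [a, b] are relevant to the notions below.\<close>

type_synonym 'a rpath = "real \<times> real \<times> (real \<Rightarrow> 'a)"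

definition geodesic_space :: "'a::metric_space itself \<Rightarrow> bool" where
  "geodesic_space _ \<longleftrightarrow>
     (\<forall>x y::'a. \<exists>g::real \<Rightarrow> 'a. g 0 = x \<and> g (dist x y) = y \<and>
        (\<forall>s\<in>{0..dist x y}. \<forall>t\<in>{0..dist x y}. dist (g s) (g t) = \<bar>s - t\<bar>))"

definition variation_sums :: "(real \<Rightarrow> 'a::metric_space) \<Rightarrow> real \<Rightarrow> real \<Rightarrow> real set" where
  "variation_sums \<alpha> s t =
     {(\<Sum>i<k. dist (\<alpha> (p i)) (\<alpha> (p (Suc i)))) | k p.
        p 0 = s \<and> p k = t \<and> (\<forall>i<k. p i \<le> p (Suc i))}"

definition rectifiable_on :: "(real \<Rightarrow> 'a::metric_space) \<Rightarrow> real \<Rightarrow> real \<Rightarrow> bool" where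
  "rectifiable_on \<alpha> a b \<longleftrightarrow> bdd_above (variation_sums \<alpha> a b)"

definition arc_length :: "(real \<Rightarrow> 'a::metric_space) \<Rightarrow> real \<Rightarrow> real \<Rightarrow> real" where
  "arc_length \<alpha> s t = Sup (variation_sums \<alpha> s t)"

definition is_path :: "'a::metric_space rpath \<Rightarrow> bool" where
  "is_path P \<longleftrightarrow> (case P of (a, b, \<alpha>) \<Rightarrow>
     a \<le> b \<and> continuous_on {a..b} \<alpha> \<and> rectifiable_on \<alpha> a b \<and>
     (\<forall>s t. a \<le> s \<longrightarrow> s \<le> t \<longrightarrow> t \<le> b \<longrightarrow> arc_length \<alpha> s t = t - s))"

definition quasi_geodesic :: "real \<Rightarrow> real \<Rightarrow> 'a::metric_space rpath \<Rightarrow> bool" where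
  "quasi_geodesic \<kappa> lam P \<longleftrightarrow> (case P of (a, b, \<alpha>) \<Rightarrow>
     (\<forall>t\<in>{a..b}. \<forall>t'\<in>{a..b}.
        dist (\<alpha> t) (\<alpha> t') \<le> \<bar>t - t'\<bar> \<and> \<bar>t - t'\<bar> \<le> \<kappa> * dist (\<alpha> t) (\<alpha> t') + lam))"

definition joins :: "'a rpath \<Rightarrow> 'a \<Rightarrow> 'a \<Rightarrow> bool" where
  "joins P x y \<longleftrightarrow> (case P of (a, b, \<alpha>) \<Rightarrow> \<alpha> a = x \<and> \<alpha> b = y)"

definition meets :: "'a rpath \<Rightarrow> 'a set \<Rightarrow> bool" where
  "meets P S \<longleftrightarrow> (case P of (a, b, \<alpha>) \<Rightarrow> (\<exists>t\<in>{a..b}. \<alpha> t \<in> S))"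

definition path_system_space :: "real \<Rightarrow> real \<Rightarrow> 'a::metric_space rpath set \<Rightarrow> bool" where
  "path_system_space \<mu> \<nu> \<Gamma> \<longleftrightarrow>
     geodesic_space TYPE('a) \<and>
     (\<forall>P\<in>\<Gamma>. is_path P) \<and>
     (\<forall>a b \<alpha> s t. (a, b, \<alpha>) \<in> \<Gamma> \<longrightarrow> a \<le> s \<longrightarrow> s \<le> t \<longrightarrow> t \<le> b \<longrightarrow> (s, t, \<alpha>) \<in> \<Gamma>) \<and>
     (\<forall>x y. \<exists>P\<in>\<Gamma>. joins P x y) \<and>
     (\<forall>P\<in>\<Gamma>. quasi_geodesic \<mu> \<nu> P)"

definition constricting :: "'a::metric_space rpath set \<Rightarrow> real \<Rightarrow> 'a set \<Rightarrow> ('a \<Rightarrow> 'a) \<Rightarrow> bool" where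
  "constricting \<Gamma> \<delta> A \<pi> \<longleftrightarrow>
     (\<forall>x. \<pi> x \<in> A) \<and>
     (\<forall>x\<in>A. dist x (\<pi> x) \<le> \<delta>) \<and>
     (\<forall>x y P. P \<in> \<Gamma> \<longrightarrow> joins P x y \<longrightarrow> dist (\<pi> x) (\<pi> y) > \<delta> \<longrightarrow>
        meets P (cball (\<pi> x) \<delta>) \<and> meets P (cball (\<pi> y) \<delta>))"

text \<open>diam S <= e, with diam possibly infinite (unfolded).\<close>
definition diam_le :: "'a::metric_space set \<Rightarrow> real \<Rightarrow> bool" where
  "diam_le S e \<longleftrightarrow> (\<forall>u\<in>S. \<forall>v\<in>S. dist u v \<le> e)"

definition buffering :: "'a::metric_space rpath set \<Rightarrow> real \<Rightarrow> real \<Rightarrow> real \<Rightarrow> nat \<Rightarrow>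
    (nat \<Rightarrow> 'a set) \<Rightarrow> (nat \<Rightarrow> 'a set) \<Rightarrow> (nat \<Rightarrow> 'a \<Rightarrow> 'a) \<Rightarrow> bool" where
  "buffering \<Gamma> \<delta> \<epsilon> L n Y A \<pi> \<longleftrightarrow>
     (\<forall>i\<le>n. Y i \<noteq> {}) \<and> (\<forall>i\<in>{1..n}. A i \<noteq> {}) \<and>
     (\<forall>i\<in>{1..n}.
        constricting \<Gamma> \<delta> (A i) (\<pi> i) \<and>
        (i \<noteq> n \<longrightarrow> diam_le (\<pi> i ` A (i+1)) \<epsilon> \<and> diam_le (\<pi> (i+1) ` A i) \<epsilon>) \<and>
        diam_le (\<pi> i ` Y (i-1)) \<epsilon> \<and> diam_le (\<pi> i ` Y i) \<epsilon> \<and>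
        setdist (A i) (Y (i-1)) \<le> \<epsilon> \<and> setdist (A i) (Y i) \<le> \<epsilon> \<and>
        setdist (\<pi> i ` Y (i-1)) (\<pi> i ` Y i) \<ge> L)"

end

theory Submission
  imports Defs
begin

lemma pss_qg:
  assumes "path_system_space \<mu> \<nu> \<Gamma>" "(a0, b0, \<alpha>) \<in> \<Gamma>" "t \<in> {a0..b0}" "t' \<in> {a0..b0}"
  shows "dist (\<alpha> t) (\<alpha> t') \<le> \<bar>t - t'\<bar> \<and> \<bar>t - t'\<bar> \<le> \<bar>\<mu>\<bar> * dist (\<alpha> t) (\<alpha> t') + \<bar>\<nu>\<bar>"
proof -
  have "quasi_geodesic \<mu> \<nu> (a0, b0, \<alpha>)" using assms(1,2) unfolding path_system_space_def by blast
  then have q: "dist (\<alpha> t) (\<alpha> t') \<le> \<bar>t - t'\<bar> \<and> \<bar>t - t'\<bar> \<le> \<mu> * dist (\<alpha> t) (\<alpha> t') + \<nu>"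
    using assms(3,4) unfolding quasi_geodesic_def by auto
  have "\<mu> * dist (\<alpha> t) (\<alpha> t') \<le> \<bar>\<mu>\<bar> * dist (\<alpha> t) (\<alpha> t')"
    by (intro mult_right_mono) auto
  then show ?thesis using q by linarith
qed

lemma pss_sub:
  assumes "path_system_space \<mu> \<nu> \<Gamma>" "(a0, b0, \<alpha>) \<in> \<Gamma>" "a0 \<le> s" "s \<le> t" "t \<le> b0"
  shows "(s, t, \<alpha>) \<in> \<Gamma> \<and> joins (s, t, \<alpha>) (\<alpha> s) (\<alpha> t)"
  using assms unfolding path_system_space_def joins_def by blast

lemma pss_uvu:
  assumes "path_system_space \<mu> \<nu> \<Gamma>" "(a0, b0, \<alpha>) \<in> \<Gamma>" "a0 \<le> t1" "t1 \<le> t2" "t2 \<le> t3" "t3 \<le> b0"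
  shows "dist (\<alpha> t1) (\<alpha> t2) + dist (\<alpha> t2) (\<alpha> t3) \<le> \<bar>\<mu>\<bar> * dist (\<alpha> t1) (\<alpha> t3) + \<bar>\<nu>\<bar>"
proof -
  have "dist (\<alpha> t1) (\<alpha> t2) \<le> \<bar>t1 - t2\<bar>" using pss_qg[OF assms(1,2), of t1 t2] assms by auto
  moreover have "dist (\<alpha> t2) (\<alpha> t3) \<le> \<bar>t2 - t3\<bar>" using pss_qg[OF assms(1,2), of t2 t3] assms by auto
  moreover have "\<bar>t1 - t3\<bar> \<le> \<bar>\<mu>\<bar> * dist (\<alpha> t1) (\<alpha> t3) + \<bar>\<nu>\<bar>" using pss_qg[OF assms(1,2), of t1 t3] assms by auto
  ultimately show ?thesis using assms by linarith
qed

lemma pss_lip: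
  assumes "path_system_space \<mu> \<nu> \<Gamma>" "constricting \<Gamma> \<delta> A \<pi>" "\<delta> \<ge> 0"
  shows "dist (\<pi> x) (\<pi> y) \<le> \<bar>\<mu>\<bar> * dist x y + \<bar>\<nu>\<bar> + 3 * \<delta>"
proof (cases "dist (\<pi> x) (\<pi> y) > \<delta>")
  case False
  have "0 \<le> \<bar>\<mu>\<bar> * dist x y" by simp
  then show ?thesis using False assms(3) by linarith
next
  case True
  obtain P where P: "P \<in> \<Gamma>" "joins P x y" using assms(1) unfolding path_system_space_def by blast
  obtain a0 b0 \<alpha> where Pe: "P = (a0, b0, \<alpha>)" by (cases P) auto
  have m: "meets P (cball (\<pi> x) \<delta>) \<and> meets P (cball (\<pi> y) \<delta>)"
    using assms(2) P True unfolding constricting_def by blast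
  then obtain t t' where t: "t \<in> {a0..b0}" "t' \<in> {a0..b0}" "dist (\<pi> x) (\<alpha> t) \<le> \<delta>" "dist (\<pi> y) (\<alpha> t') \<le> \<delta>"
    unfolding Pe meets_def by auto
  have xy: "\<alpha> a0 = x" "\<alpha> b0 = y" using P(2) unfolding Pe joins_def by auto
  have "dist (\<alpha> t) (\<alpha> t') \<le> \<bar>t - t'\<bar>" using pss_qg[OF assms(1) P(1)[unfolded Pe] t(1,2)] by auto
  moreover have "\<bar>a0 - b0\<bar> \<le> \<bar>\<mu>\<bar> * dist x y + \<bar>\<nu>\<bar>"
    using pss_qg[OF assms(1) P(1)[unfolded Pe], of a0 b0] t xy by auto
  moreover have "\<bar>t - t'\<bar> \<le> \<bar>a0 - b0\<bar>" using t by auto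
  moreover have "dist (\<pi> x) (\<pi> y) \<le> dist (\<pi> x) (\<alpha> t) + dist (\<alpha> t) (\<alpha> t') + dist (\<pi> y) (\<alpha> t')"
    using dist_triangle[of "\<pi> x" "\<pi> y" "\<alpha> t"] dist_triangle[of "\<alpha> t" "\<pi> y" "\<alpha> t'"]
    by (simp add: dist_commute)
  ultimately show ?thesis using t assms(3) by linarith
qed

lemma pss_lip_le:
  assumes "path_system_space \<mu> \<nu> \<Gamma>" "constricting \<Gamma> \<delta> A \<pi>" "\<delta> \<ge> 0" "dist x y \<le> r"
  shows "dist (\<pi> x) (\<pi> y) \<le> \<bar>\<mu>\<bar> * r + \<bar>\<nu>\<bar> + 3 * \<delta>"
proof -
  have "\<bar>\<mu>\<bar> * dist x y \<le> \<bar>\<mu>\<bar> * r" using assms(4) by (intro mult_left_mono) auto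
  then show ?thesis using pss_lip[OF assms(1-3), of x y] by linarith
qed

lemma constr_in: "constricting \<Gamma> \<delta> A \<pi> \<Longrightarrow> \<pi> x \<in> A"
  unfolding constricting_def by blast

lemma constr_self: "constricting \<Gamma> \<delta> A \<pi> \<Longrightarrow> x \<in> A \<Longrightarrow> dist x (\<pi> x) \<le> \<delta>"
  unfolding constricting_def by blast

lemma constr_meets:
  assumes "constricting \<Gamma> \<delta> A \<pi>" "(a0, b0, \<alpha>) \<in> \<Gamma>" "joins (a0, b0, \<alpha>) x y" "dist (\<pi> x) (\<pi> y) > \<delta>"
  shows "\<exists>t\<in>{a0..b0}. dist (\<alpha> t) (\<pi> x) \<le> \<delta>" "\<exists>t\<in>{a0..b0}. dist (\<alpha> t) (\<pi> y) \<le> \<delta>"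
  using assms unfolding constricting_def meets_def by (auto simp: dist_commute)

lemma pss_order:
  assumes pss: "path_system_space \<mu> \<nu> \<Gamma>" and c: "constricting \<Gamma> \<delta> B \<pi>" and d0: "\<delta> \<ge> 0"
    and P: "(a0, b0, \<alpha>) \<in> \<Gamma>" "joins (a0, b0, \<alpha>) x z"
    and D: "D \<le> dist (\<pi> x) (\<pi> z)" "D > \<bar>\<mu>\<bar> * \<delta> + \<bar>\<nu>\<bar> + 5 * \<delta>"
      "2 * (D - 2 * \<delta>) > \<bar>\<mu>\<bar> * (2 * \<delta>) + \<bar>\<nu>\<bar>"
  shows "\<exists>s t. a0 \<le> s \<and> s \<le> t \<and> t \<le> b0 \<and> dist (\<alpha> s) (\<pi> x) \<le> \<delta> \<and> dist (\<alpha> t) (\<pi> z) \<le> \<delta>"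
proof -
  have "0 \<le> \<bar>\<mu>\<bar> * \<delta>" using d0 by simp
  then have Dd: "dist (\<pi> x) (\<pi> z) > \<delta>" using D d0 by linarith
  obtain s where s: "s \<in> {a0..b0}" "dist (\<alpha> s) (\<pi> x) \<le> \<delta>" using constr_meets(1)[OF c P Dd] by blast
  obtain t where t: "t \<in> {a0..b0}" "dist (\<alpha> t) (\<pi> z) \<le> \<delta>" using constr_meets(2)[OF c P Dd] by blast
  show ?thesis
  proof (cases "s \<le> t")
    case True then show ?thesis using s t by auto
  next
    case False
    have sub: "(s, b0, \<alpha>) \<in> \<Gamma>" "joins (s, b0, \<alpha>) (\<alpha> s) z"
      using pss_sub[OF pss P(1), of s b0] s P(2) by (auto simp: joins_def)
    have l1: "dist (\<pi> (\<alpha> s)) (\<pi> (\<pi> x)) \<le> \<bar>\<mu>\<bar> * \<delta> + \<bar>\<nu>\<bar> + 3 * \<delta>"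
      using pss_lip_le[OF pss c d0 s(2)] .
    have l2: "dist (\<pi> x) (\<pi> (\<pi> x)) \<le> \<delta>" using constr_self[OF c constr_in[OF c]] .
    have "dist (\<pi> x) (\<pi> z) \<le> dist (\<pi> x) (\<pi> (\<pi> x)) + dist (\<pi> (\<pi> x)) (\<pi> (\<alpha> s)) + dist (\<pi> (\<alpha> s)) (\<pi> z)"
      using dist_triangle[of "\<pi> x" "\<pi> z" "\<pi> (\<pi> x)"] dist_triangle[of "\<pi> (\<pi> x)" "\<pi> z" "\<pi> (\<alpha> s)"] by linarith
    then have "dist (\<pi> (\<alpha> s)) (\<pi> z) > \<delta>" using l1 l2 D by (simp add: dist_commute)
    then obtain t' where t': "t' \<in> {s..b0}" "dist (\<alpha> t') (\<pi> z) \<le> \<delta>"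
      using constr_meets(2)[OF c sub] by blast
    have u: "dist (\<alpha> t) (\<alpha> s) + dist (\<alpha> s) (\<alpha> t') \<le> \<bar>\<mu>\<bar> * dist (\<alpha> t) (\<alpha> t') + \<bar>\<nu>\<bar>"
      using pss_uvu[OF pss P(1), of t s t'] False t t' by auto
    have "dist (\<alpha> t) (\<alpha> t') \<le> 2 * \<delta>"
      using dist_triangle[of "\<alpha> t" "\<alpha> t'" "\<pi> z"] t(2) t'(2) by (simp add: dist_commute)
    then have u2: "\<bar>\<mu>\<bar> * dist (\<alpha> t) (\<alpha> t') \<le> \<bar>\<mu>\<bar> * (2 * \<delta>)" by (intro mult_left_mono) auto
    have "dist (\<pi> x) (\<pi> z) \<le> dist (\<pi> x) (\<alpha> s) + dist (\<alpha> s) (\<alpha> t) + dist (\<alpha> t) (\<pi> z)"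
      using dist_triangle[of "\<pi> x" "\<pi> z" "\<alpha> s"] dist_triangle[of "\<alpha> s" "\<pi> z" "\<alpha> t"] by linarith
    moreover have "dist (\<pi> x) (\<pi> z) \<le> dist (\<pi> x) (\<alpha> s) + dist (\<alpha> s) (\<alpha> t') + dist (\<alpha> t') (\<pi> z)"
      using dist_triangle[of "\<pi> x" "\<pi> z" "\<alpha> s"] dist_triangle[of "\<alpha> s" "\<pi> z" "\<alpha> t'"] by linarith
    ultimately have False using u u2 D s(2) t(2) t'(2) by (simp add: dist_commute)
    then show ?thesis ..
  qed
qed

lemma pss_behrstock:
  assumes pss: "path_system_space \<mu> \<nu> \<Gamma>" and cB: "constricting \<Gamma> \<delta> B \<pi>B"
    and cA: "constricting \<Gamma> \<delta> A \<pi>A" and d0: "\<delta> \<ge> 0" and e0: "\<epsilon> \<ge> 0"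
    and dm: "diam_le (\<pi>B ` A) \<epsilon>" and aA: "a \<in> A"
    and D: "D \<le> dist (\<pi>B y) (\<pi>B a)" "D > \<bar>\<mu>\<bar> * \<delta> + \<bar>\<nu>\<bar> + 5 * \<delta>"
      "2 * (D - 2 * \<delta>) > \<bar>\<mu>\<bar> * (2 * \<delta>) + \<bar>\<nu>\<bar>"
      "D > 2 * (\<bar>\<mu>\<bar> * \<delta> + \<bar>\<nu>\<bar> + 3 * \<delta>) + \<epsilon> + 2 * \<delta>"
      "2 * D - (\<bar>\<mu>\<bar> * \<delta> + \<bar>\<nu>\<bar> + 3 * \<delta> + \<epsilon>) - 4 * \<delta>
         > \<bar>\<mu>\<bar> * (2 * \<delta> + (\<bar>\<mu>\<bar> * \<delta> + \<bar>\<nu>\<bar> + 3 * \<delta> + \<epsilon>)) + \<bar>\<nu>\<bar>"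
  shows "dist (\<pi>A y) (\<pi>A (\<pi>B y)) \<le> \<delta> + (\<bar>\<mu>\<bar> * \<delta> + \<bar>\<nu>\<bar> + 3 * \<delta>)"
proof -
  define K where "K = \<bar>\<mu>\<bar> * \<delta> + \<bar>\<nu>\<bar> + 3 * \<delta>"
  define E where "E = K + \<epsilon>"
  obtain P where P: "P \<in> \<Gamma>" "joins P y a" using pss unfolding path_system_space_def by blast
  obtain a0 b0 \<alpha> where Pe: "P = (a0, b0, \<alpha>)" by (cases P) auto
  note P = P[unfolded Pe]
  obtain s t where st: "a0 \<le> s" "s \<le> t" "t \<le> b0" "dist (\<alpha> s) (\<pi>B y) \<le> \<delta>" "dist (\<alpha> t) (\<pi>B a) \<le> \<delta>"
    using pss_order[OF pss cB d0 P D(1-3)] by blast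
  have y0: "\<alpha> a0 = y" using P(2) by (simp add: joins_def)
  have ls: "dist (\<pi>B (\<alpha> s)) (\<pi>B y) \<le> K + \<delta>"
  proof -
    have "dist (\<pi>B (\<alpha> s)) (\<pi>B (\<pi>B y)) \<le> K" unfolding K_def using pss_lip_le[OF pss cB d0 st(4)] .
    moreover have "dist (\<pi>B y) (\<pi>B (\<pi>B y)) \<le> \<delta>" using constr_self[OF cB constr_in[OF cB]] .
    ultimately show ?thesis using dist_triangle[of "\<pi>B (\<alpha> s)" "\<pi>B y" "\<pi>B (\<pi>B y)"] by (simp add: dist_commute)
  qed
  have claim: "dist (\<pi>A y) (\<pi>A (\<alpha> s)) \<le> \<delta>"
  proof (rule ccontr)
    assume "\<not> ?thesis"
    then have gt: "dist (\<pi>A y) (\<pi>A (\<alpha> s)) > \<delta>" by simp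
    have sub: "(a0, s, \<alpha>) \<in> \<Gamma>" "joins (a0, s, \<alpha>) y (\<alpha> s)"
      using pss_sub[OF pss P(1), of a0 s] st y0 by auto
    obtain r where r: "r \<in> {a0..s}" "dist (\<alpha> r) (\<pi>A y) \<le> \<delta>" using constr_meets(1)[OF cA sub gt] by blast
    have rE: "dist (\<pi>B (\<alpha> r)) (\<pi>B a) \<le> E"
    proof -
      have "dist (\<pi>B (\<alpha> r)) (\<pi>B (\<pi>A y)) \<le> K" unfolding K_def using pss_lip_le[OF pss cB d0 r(2)] .
      moreover have "dist (\<pi>B (\<pi>A y)) (\<pi>B a) \<le> \<epsilon>" using dm constr_in[OF cA] aA unfolding diam_le_def by blast
      ultimately show ?thesis unfolding E_def using dist_triangle[of "\<pi>B (\<alpha> r)" "\<pi>B a" "\<pi>B (\<pi>A y)"] by linarith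
    qed
    have ry: "dist (\<pi>B (\<alpha> r)) (\<pi>B y) \<ge> D - E"
      using dist_triangle[of "\<pi>B y" "\<pi>B a" "\<pi>B (\<alpha> r)"] rE D(1) by (simp add: dist_commute)
    have "dist (\<pi>B (\<alpha> r)) (\<pi>B (\<alpha> s)) > \<delta>"
      using dist_triangle[of "\<pi>B (\<alpha> r)" "\<pi>B y" "\<pi>B (\<alpha> s)"] ry ls D(4) unfolding E_def K_def
      by (simp add: dist_commute)
    moreover have sub2: "(r, s, \<alpha>) \<in> \<Gamma>" "joins (r, s, \<alpha>) (\<alpha> r) (\<alpha> s)"
      using pss_sub[OF pss P(1), of r s] st r by auto
    ultimately obtain w where w: "w \<in> {r..s}" "dist (\<alpha> w) (\<pi>B (\<alpha> r)) \<le> \<delta>"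
      using constr_meets(1)[OF cB sub2] by blast
    have u: "dist (\<alpha> w) (\<alpha> s) + dist (\<alpha> s) (\<alpha> t) \<le> \<bar>\<mu>\<bar> * dist (\<alpha> w) (\<alpha> t) + \<bar>\<nu>\<bar>"
      using pss_uvu[OF pss P(1), of w s t] st r w by auto
    have "dist (\<alpha> w) (\<alpha> t) \<le> 2 * \<delta> + E"
      using dist_triangle[of "\<alpha> w" "\<alpha> t" "\<pi>B (\<alpha> r)"] dist_triangle[of "\<pi>B (\<alpha> r)" "\<alpha> t" "\<pi>B a"] w(2) rE st(5)
      by (simp add: dist_commute)
    then have u2: "\<bar>\<mu>\<bar> * dist (\<alpha> w) (\<alpha> t) \<le> \<bar>\<mu>\<bar> * (2 * \<delta> + E)" by (intro mult_left_mono) auto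
    have "dist (\<pi>B (\<alpha> r)) (\<pi>B y) \<le> dist (\<alpha> w) (\<pi>B (\<alpha> r)) + dist (\<alpha> w) (\<alpha> s) + dist (\<alpha> s) (\<pi>B y)"
      using dist_triangle[of "\<pi>B (\<alpha> r)" "\<pi>B y" "\<alpha> w"] dist_triangle[of "\<alpha> w" "\<pi>B y" "\<alpha> s"]
      by (simp add: dist_commute)
    moreover have "dist (\<pi>B y) (\<pi>B a) \<le> dist (\<alpha> s) (\<pi>B y) + dist (\<alpha> s) (\<alpha> t) + dist (\<alpha> t) (\<pi>B a)"
      using dist_triangle[of "\<pi>B y" "\<pi>B a" "\<alpha> s"] dist_triangle[of "\<alpha> s" "\<pi>B a" "\<alpha> t"]
      by (simp add: dist_commute)
    ultimately show False using u u2 ry D(1) D(5) w(2) st(4,5) unfolding E_def K_def by linarith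
  qed
  have "dist (\<pi>A (\<alpha> s)) (\<pi>A (\<pi>B y)) \<le> K" unfolding K_def using pss_lip_le[OF pss cA d0 st(4)] .
  then show ?thesis using claim dist_triangle[of "\<pi>A y" "\<pi>A (\<pi>B y)" "\<pi>A (\<alpha> s)"] unfolding K_def by linarith
qed

lemma setdist_close:
  assumes "setdist S T \<le> \<epsilon>" "S \<noteq> {}" "T \<noteq> {}"
  obtains x y where "x \<in> S" "y \<in> T" "dist x y \<le> \<epsilon> + 1"
proof -
  have lt: "setdist S T < \<epsilon> + 1" using assms(1) by linarith
  obtain x y where "x \<in> S" "y \<in> T" "dist x y < \<epsilon> + 1" using setdist_ltE[OF lt assms(2,3)] by blast
  then show ?thesis using that[of x y] by simp
qed

theorem mainTheorem9:
  fixes \<mu> \<nu> :: real and \<Gamma> :: "'a::metric_space rpath set"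
  assumes "path_system_space \<mu> \<nu> \<Gamma>"
  shows "\<forall>\<delta>\<ge>0. \<forall>\<epsilon>\<ge>0. \<forall>\<theta>\<ge>0. \<exists>L\<ge>0. \<forall>n Y A \<pi>.
           buffering \<Gamma> \<delta> \<epsilon> L n Y A \<pi> \<longrightarrow>
           (\<forall>i\<in>{1..n}. setdist (\<pi> i ` Y 0) (\<pi> i ` Y i) > \<theta>)"
proof (intro allI impI)
  note pss = assms
  fix \<delta> \<epsilon> \<theta> :: real
  assume d0: "\<delta> \<ge> 0" and e0: "\<epsilon> \<ge> 0" and t0: "\<theta> \<ge> 0"
  define m where "m = \<bar>\<mu>\<bar>"
  define v where "v = \<bar>\<nu>\<bar>"
  have m0: "m \<ge> 0" and v0: "v \<ge> 0" unfolding m_def v_def by auto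
  define K where "K = m * \<delta> + v + 3 * \<delta>"
  define K1 where "K1 = m * (\<epsilon> + 1) + v + 3 * \<delta>"
  define P where "P = m * (m * \<delta> + v + 6 * \<delta> + \<epsilon>)"
  define D where "D = 3 * (m * \<delta> + v + 8 * \<delta> + \<epsilon>) + P + 1"
  define \<theta>' where "\<theta>' = D + \<epsilon> + K1"
  define C where "C = \<delta> + K + \<epsilon> + K1"
  define T where "T = max \<theta> \<theta>'"
  define L where "L = T + C + 1"
  have md: "m * \<delta> \<ge> 0" using m0 d0 by simp
  have P0: "P \<ge> 0" unfolding P_def using m0 d0 e0 v0 md by simp
  have K10: "K1 \<ge> 0" unfolding K1_def using m0 e0 v0 d0 by simp
  have K0: "K \<ge> 0" unfolding K_def using md v0 d0 by simp
  have C0: "C \<ge> 0" unfolding C_def using K0 K10 d0 e0 by simp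
  have T0: "T \<ge> 0" unfolding T_def using t0 by simp
  have Pm: "m * (2 * \<delta> + (m * \<delta> + v + 3 * \<delta> + \<epsilon>)) \<le> P"
    unfolding P_def by (intro mult_left_mono) (use d0 m0 in auto)
  have Pm2: "m * (2 * \<delta>) = 2 * (m * \<delta>)" by simp
  have D1: "D > m * \<delta> + v + 5 * \<delta>" unfolding D_def using P0 md v0 d0 e0 by (smt (verit))
  have D2: "2 * (D - 2 * \<delta>) > m * (2 * \<delta>) + v" unfolding D_def Pm2 using P0 md v0 d0 e0 by (smt (verit))
  have D3: "D > 2 * (m * \<delta> + v + 3 * \<delta>) + \<epsilon> + 2 * \<delta>" unfolding D_def using P0 md v0 d0 e0 by (smt (verit))
  have D4: "2 * D - (m * \<delta> + v + 3 * \<delta> + \<epsilon>) - 4 * \<delta> > m * (2 * \<delta> + (m * \<delta> + v + 3 * \<delta> + \<epsilon>)) + v"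
    unfolding D_def using Pm P0 md v0 d0 e0 by (smt (verit))
  show "\<exists>L\<ge>0. \<forall>n Y A \<pi>. buffering \<Gamma> \<delta> \<epsilon> L n Y A \<pi> \<longrightarrow>
           (\<forall>i\<in>{1..n}. setdist (\<pi> i ` Y 0) (\<pi> i ` Y i) > \<theta>)"
  proof (intro exI[of _ L] conjI allI impI)
    show "L \<ge> 0" unfolding L_def using T0 C0 by simp
    fix n Y A \<pi>
    assume buf: "buffering \<Gamma> \<delta> \<epsilon> L n Y A \<pi>"
    have Yne: "\<And>i. i \<le> n \<Longrightarrow> Y i \<noteq> {}" and Ane: "\<And>i. i \<in> {1..n} \<Longrightarrow> A i \<noteq> {}"
      using buf unfolding buffering_def by blast+
    have bc: "\<And>i. i \<in> {1..n} \<Longrightarrow> constricting \<Gamma> \<delta> (A i) (\<pi> i) \<and>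
        (i \<noteq> n \<longrightarrow> diam_le (\<pi> i ` A (i+1)) \<epsilon> \<and> diam_le (\<pi> (i+1) ` A i) \<epsilon>) \<and>
        setdist (A i) (Y (i-1)) \<le> \<epsilon> \<and> setdist (A i) (Y i) \<le> \<epsilon> \<and>
        setdist (\<pi> i ` Y (i-1)) (\<pi> i ` Y i) \<ge> L"
      using buf unfolding buffering_def by blast
    have main: "\<forall>i. 1 \<le> i \<and> i \<le> n \<longrightarrow> setdist (\<pi> i ` Y 0) (\<pi> i ` Y i) > T"
    proof (intro allI)
      fix i show "1 \<le> i \<and> i \<le> n \<longrightarrow> setdist (\<pi> i ` Y 0) (\<pi> i ` Y i) > T"
      proof (induction i)
        case 0 then show ?case by simp
      next
        case (Suc j)
        show ?case
        proof
          assume ij: "1 \<le> Suc j \<and> Suc j \<le> n"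
          let ?i = "Suc j"
          have bi: "constricting \<Gamma> \<delta> (A ?i) (\<pi> ?i)" "setdist (A ?i) (Y j) \<le> \<epsilon>"
              "setdist (\<pi> ?i ` Y j) (\<pi> ?i ` Y ?i) \<ge> L"
            using bc[of ?i] ij by auto
          have close: "\<forall>y\<in>Y 0. \<exists>x\<in>Y j. dist (\<pi> ?i y) (\<pi> ?i x) \<le> C"
          proof
            fix y assume y: "y \<in> Y 0"
            show "\<exists>x\<in>Y j. dist (\<pi> ?i y) (\<pi> ?i x) \<le> C"
            proof (cases "j = 0")
              case True then show ?thesis using y C0 by (intro bexI[of _ y]) auto
            next
              case False
              then have jr: "j \<in> {1..n}" using ij by auto
              have bj: "constricting \<Gamma> \<delta> (A j) (\<pi> j)" "diam_le (\<pi> j ` A ?i) \<epsilon>"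
                  "diam_le (\<pi> ?i ` A j) \<epsilon>" "setdist (A j) (Y j) \<le> \<epsilon>"
                using bc[OF jr] ij by auto
              have IH: "setdist (\<pi> j ` Y 0) (\<pi> j ` Y j) > T" using Suc.IH jr by auto
              obtain a x' where ax: "a \<in> A ?i" "x' \<in> Y j" "dist a x' \<le> \<epsilon> + 1"
                using setdist_close[OF bi(2) Ane Yne] ij by auto
              have "setdist (\<pi> j ` Y 0) (\<pi> j ` Y j) \<le> dist (\<pi> j y) (\<pi> j x')"
                using y ax(2) by (intro setdist_le_dist) auto
              then have yx: "dist (\<pi> j y) (\<pi> j x') > \<theta>'" using IH unfolding T_def by linarith
              have "dist (\<pi> j x') (\<pi> j a) \<le> K1"
                unfolding K1_def m_def v_def using pss_lip_le[OF pss bj(1) d0, of x' a] ax(3)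
                by (simp add: dist_commute)
              then have Dya: "D \<le> dist (\<pi> j y) (\<pi> j a)"
                using yx dist_triangle[of "\<pi> j y" "\<pi> j x'" "\<pi> j a"] e0 dist_commute[of "\<pi> j a" "\<pi> j x'"]
                unfolding \<theta>'_def by linarith
              have beh: "dist (\<pi> ?i y) (\<pi> ?i (\<pi> j y)) \<le> \<delta> + K"
                using pss_behrstock[OF pss bj(1) bi(1) d0 e0 bj(2) ax(1) Dya D1[unfolded m_def v_def]
                  D2[unfolded m_def v_def] D3[unfolded m_def v_def] D4[unfolded m_def v_def]]
                unfolding K_def m_def v_def .
              obtain b' x'' where bx: "b' \<in> A j" "x'' \<in> Y j" "dist b' x'' \<le> \<epsilon> + 1"
                using setdist_close[OF bj(4) Ane Yne] jr ij by auto
              have "dist (\<pi> ?i (\<pi> j y)) (\<pi> ?i b') \<le> \<epsilon>"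
                using bj(3) constr_in[OF bj(1)] bx(1) unfolding diam_le_def by blast
              moreover have "dist (\<pi> ?i b') (\<pi> ?i x'') \<le> K1"
                unfolding K1_def m_def v_def using pss_lip_le[OF pss bi(1) d0, of b' x''] bx(3) by simp
              ultimately have "dist (\<pi> ?i y) (\<pi> ?i x'') \<le> C"
                using beh dist_triangle[of "\<pi> ?i y" "\<pi> ?i x''" "\<pi> ?i (\<pi> j y)"]
                  dist_triangle[of "\<pi> ?i (\<pi> j y)" "\<pi> ?i x''" "\<pi> ?i b'"] unfolding C_def by linarith
              then show ?thesis using bx(2) by blast
            qed
          qed
          have "T + 1 \<le> setdist (\<pi> ?i ` Y 0) (\<pi> ?i ` Y ?i)"
          proof (rule le_setdistI)
            show "\<pi> ?i ` Y 0 \<noteq> {}" using Yne[of 0] by auto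
            show "\<pi> ?i ` Y ?i \<noteq> {}" using Yne[of ?i] ij by auto
            fix u w assume u: "u \<in> \<pi> ?i ` Y 0" and w: "w \<in> \<pi> ?i ` Y ?i"
            obtain y where y: "y \<in> Y 0" "u = \<pi> ?i y" using u by auto
            obtain x where x: "x \<in> Y j" "dist (\<pi> ?i y) (\<pi> ?i x) \<le> C" using close y(1) by blast
            have "setdist (\<pi> ?i ` Y j) (\<pi> ?i ` Y ?i) \<le> dist (\<pi> ?i x) w"
              by (rule setdist_le_dist) (use x(1) w in auto)
            then have "L \<le> dist (\<pi> ?i x) w" using bi(3) by linarith
            moreover have "dist (\<pi> ?i x) w \<le> dist (\<pi> ?i y) (\<pi> ?i x) + dist (\<pi> ?i y) w"
              using dist_triangle[of "\<pi> ?i x" w "\<pi> ?i y"] by (simp add: dist_commute)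
            ultimately show "T + 1 \<le> dist u w"
              using x(2) unfolding L_def y(2) by linarith
          qed
          then show "setdist (\<pi> ?i ` Y 0) (\<pi> ?i ` Y ?i) > T" by linarith
        qed
      qed
    qed
    show "\<forall>i\<in>{1..n}. setdist (\<pi> i ` Y 0) (\<pi> i ` Y i) > \<theta>"
    proof
      fix i assume "i \<in> {1..n}"
      then have "setdist (\<pi> i ` Y 0) (\<pi> i ` Y i) > T" using main by auto
      moreover have "T \<ge> \<theta>" unfolding T_def by simp
      ultimately show "setdist (\<pi> i ` Y 0) (\<pi> i ` Y i) > \<theta>" by linarith
    qed
  qed
qed

end
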